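(* Let $G$ be a finite simple graph without isolated vertices, and consider a position of the Disjoint Domination Game (or its biased $(d:s)$ variant) on $G$ in which no vertex has a monochromatic closed neighborhood. Let $C$ be a connected component of $G$, and suppose there are an uncolored vertex $u\in V(C)$ and a color $c\in\{p,b\}$ such that coloring $u$ with $c$ is a legal move and, after it, every vertex of $C$ is dominated by both $V_p$ and $V_b$. Then no sequence of legal moves from the current position results in a vertex $v\in V(C)$ with $N[v]\subseteq V_p$ or $N[v]\subseteq V_b$.
   Context: $N[v]$ denotes the closed neighborhood of $v$. In the Disjoint Domination Game, vertices are colored one at a time with colors $p$ or $b$ (either player may use either color); $V_p,V_b$ are the current sets of vertices of each color; coloring a vertex $v$ with color $c$ is legal iff $v$ is uncolored and some $w\in N[v]$ satisfies $N[w]\cap V_c=\emptyset$ (before the coloring). A vertex $x$ is dominated by a set $S$ if $N[x]\cap S\neq\emptyset$. *)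

theory Defs
  imports Main
begin

definition simple_graph :: "'a set \<Rightarrow> ('a \<Rightarrow> 'a \<Rightarrow> bool) \<Rightarrow> bool" where
  "simple_graph V E \<longleftrightarrow> finite V \<and>
     (\<forall>x y. E x y \<longrightarrow> x \<in> V \<and> y \<in> V \<and> x \<noteq> y \<and> E y x)"

definition cnbh :: "'a set \<Rightarrow> ('a \<Rightarrow> 'a \<Rightarrow> bool) \<Rightarrow> 'a \<Rightarrow> 'a set" where
  "cnbh V E v = {w \<in> V. w = v \<or> E v w}"

definition is_component :: "'a set \<Rightarrow> ('a \<Rightarrow> 'a \<Rightarrow> bool) \<Rightarrow> 'a set \<Rightarrow> bool" where
  "is_component V E C \<longleftrightarrow> (\<exists>x \<in> V. C = {y. E\<^sup>*\<^sup>* x y})"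

datatype color = P | B

fun colset :: "color \<Rightarrow> 'a set \<times> 'a set \<Rightarrow> 'a set" where
  "colset P s = fst s"
| "colset B s = snd s"

fun move :: "'a set \<times> 'a set \<Rightarrow> 'a \<Rightarrow> color \<Rightarrow> 'a set \<times> 'a set" where
  "move (Vp, Vb) v P = (insert v Vp, Vb)"
| "move (Vp, Vb) v B = (Vp, insert v Vb)"

definition legal :: "'a set \<Rightarrow> ('a \<Rightarrow> 'a \<Rightarrow> bool) \<Rightarrow> 'a set \<times> 'a set \<Rightarrow> 'a \<Rightarrow> color \<Rightarrow> bool" where
  "legal V E s v c \<longleftrightarrow> v \<in> V \<and> v \<notin> fst s \<and> v \<notin> snd s \<and>
     (\<exists>w \<in> cnbh V E v. cnbh V E w \<inter> colset c s = {})"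

inductive reach :: "'a set \<Rightarrow> ('a \<Rightarrow> 'a \<Rightarrow> bool) \<Rightarrow> 'a set \<times> 'a set \<Rightarrow> 'a set \<times> 'a set \<Rightarrow> bool"
  for V E where
  refl: "reach V E s s"
| step: "reach V E s t \<Longrightarrow> legal V E t v c \<Longrightarrow> reach V E s (move t v c)"

definition dominated :: "'a set \<Rightarrow> ('a \<Rightarrow> 'a \<Rightarrow> bool) \<Rightarrow> 'a set \<Rightarrow> 'a \<Rightarrow> bool" where
  "dominated V E S x \<longleftrightarrow> cnbh V E x \<inter> S \<noteq> {}"

end

theory Submission
  imports Defs
begin

lemma colset_move: "colset d (move t v e) = (if d = e then insert v (colset d t) else colset d t)"
  by (cases t; cases d; cases e) auto


lemma legal_unc: "legal V E t v e \<Longrightarrow> v \<notin> colset d t"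
  unfolding legal_def by (cases d) auto

lemma reach_disj: "reach V E s0 t \<Longrightarrow> colset P s0 \<inter> colset B s0 = {} \<Longrightarrow> colset P t \<inter> colset B t = {}"
proof (induction rule: reach.induct)
  case refl then show ?case by simp
next
  case (step s0 t v e)
  have "v \<notin> colset P t" "v \<notin> colset B t" using step.hyps(2) unfolding legal_def by (cases t, simp)+
  then show ?case using step.IH step.prems by (cases e) (auto simp: colset_move)
qed

lemma reach_inv:
  assumes "reach V E s0 t" "\<forall>x \<in> cnbh V E u. cnbh V E x \<inter> colset d s0 \<noteq> {}" "u \<notin> colset d s0"
  shows "u \<notin> colset d t \<and> colset d s0 \<subseteq> colset d t"
  using assms
proof (induction rule: reach.induct)
  case refl then show ?case by simp
next
  case (step s0 t v e)
  then have IH: "u \<notin> colset d t" "colset d s0 \<subseteq> colset d t" by auto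
  have "\<not> (d = e \<and> v = u)"
  proof
    assume h: "d = e \<and> v = u"
    then obtain w where "w \<in> cnbh V E u" "cnbh V E w \<inter> colset d t = {}"
      using step.hyps(2) unfolding legal_def by auto
    then show False using step.prems(1) IH(2) by blast
  qed
  then show ?case using IH by (auto simp: colset_move)
qed

theorem lemma9:
  fixes V :: "'a set" and E :: "'a \<Rightarrow> 'a \<Rightarrow> bool"
    and Vp Vb C :: "'a set" and u :: 'a and c :: color
  assumes "simple_graph V E"
    and "\<forall>v \<in> V. \<exists>w. E v w"
    and "reach V E ({}, {}) (Vp, Vb)"
    and "\<forall>v \<in> V. \<not> cnbh V E v \<subseteq> Vp \<and> \<not> cnbh V E v \<subseteq> Vb"
    and "is_component V E C"
    and "u \<in> C"
    and "legal V E (Vp, Vb) u c"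
    and "\<forall>x \<in> C. dominated V E (fst (move (Vp, Vb) u c)) x
                 \<and> dominated V E (snd (move (Vp, Vb) u c)) x"
  shows "\<forall>s. reach V E (Vp, Vb) s \<longrightarrow>
           (\<forall>v \<in> C. \<not> cnbh V E v \<subseteq> fst s \<and> \<not> cnbh V E v \<subseteq> snd s)"
proof (intro allI impI ballI)
  fix s v assume rs: "reach V E (Vp, Vb) s" and vC: "v \<in> C"
  have dom: "\<And>d x. x \<in> C \<Longrightarrow> cnbh V E x \<inter> colset d (move (Vp, Vb) u c) \<noteq> {}"
  proof -
    fix d x assume "x \<in> C"
    then show "cnbh V E x \<inter> colset d (move (Vp, Vb) u c) \<noteq> {}"
      using assms(8) unfolding dominated_def by (cases d) auto
  qed
  obtain x0 where x0: "C = {y. E\<^sup>*\<^sup>* x0 y}" using assms(5) unfolding is_component_def by auto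
  have clos: "\<And>w. w \<in> cnbh V E u \<Longrightarrow> w \<in> C"
    using assms(6) x0 unfolding cnbh_def by auto
  have disj0: "colset P (Vp, Vb) \<inter> colset B (Vp, Vb) = {}"
    using reach_disj[OF assms(3)] by simp
  have disj: "colset P s \<inter> colset B s = {}" using reach_disj[OF rs disj0] .
  have mono: "\<And>d. colset d (Vp, Vb) \<subseteq> colset d s"
  proof -
    fix d
    have "reach V E s0 t \<Longrightarrow> colset d s0 \<subseteq> colset d t" for s0 t
      by (induction rule: reach.induct) (auto simp: colset_move)
    then show "colset d (Vp, Vb) \<subseteq> colset d s" using rs by blast
  qed
  have key: "\<not> cnbh V E v \<subseteq> colset d s" if "d \<noteq> e" for d e
  proof
    assume sub: "cnbh V E v \<subseteq> colset d s"
    obtain y where y: "y \<in> cnbh V E v" "y \<in> colset e (move (Vp, Vb) u c)"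
      using dom[OF vC, of e] by auto
    show False
    proof (cases "y \<in> colset e (Vp, Vb)")
      case True
      then have "y \<in> colset e s" using mono by blast
      moreover have "y \<in> colset d s" using sub y(1) by blast
      ultimately show False using disj that by (cases d; cases e) auto
    next
      case False
      then have yu: "y = u" "e = c" using y(2) by (auto simp: colset_move split: if_splits)
      have dc: "colset d (move (Vp, Vb) u c) = colset d (Vp, Vb)"
        using that yu by (simp add: colset_move)
      have "\<forall>x \<in> cnbh V E u. cnbh V E x \<inter> colset d (Vp, Vb) \<noteq> {}"
        using dom clos dc by metis
      moreover have "u \<notin> colset d (Vp, Vb)" using legal_unc[OF assms(7)] .
      ultimately have "u \<notin> colset d s" using reach_inv[OF rs] by blast
      then show False using sub y(1) yu by blast
    qed
  qed
  show "\<not> cnbh V E v \<subseteq> fst s \<and> \<not> cnbh V E v \<subseteq> snd s"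
    using key[of P B] key[of B P] by simp
qed

end
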